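(* Let $G$ be a connected edge-stable equimatchable graph with a cut vertex $v$. Then each connected component of $G-v$ is an edge-stable equimatchable graph.
   Context: All graphs are finite and simple. A graph is equimatchable if all its maximal matchings have the same cardinality; an equimatchable graph $G$ is edge-stable if $G\setminus e$ (delete edge $e$, keep vertices) is equimatchable for every $e\in E(G)$. A cut vertex of a connected graph is a vertex whose removal disconnects it. *)

theory Defs
  imports Main
begin

definition graph :: "'a set \<Rightarrow> 'a set set \<Rightarrow> bool" where
  "graph V E \<longleftrightarrow> finite V \<and> (\<forall>e\<in>E. \<exists>u v. e = {u, v} \<and> u \<noteq> v \<and> u \<in> V \<and> v \<in> V)"

definition matching :: "'a set set \<Rightarrow> 'a set set \<Rightarrow> bool" where
  "matching E M \<longleftrightarrow> M \<subseteq> E \<and> (\<forall>e1\<in>M. \<forall>e2\<in>M. e1 \<noteq> e2 \<longrightarrow> e1 \<inter> e2 = {})"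

definition maximal_matching :: "'a set set \<Rightarrow> 'a set set \<Rightarrow> bool" where
  "maximal_matching E M \<longleftrightarrow> matching E M \<and> (\<forall>M'. matching E M' \<longrightarrow> M \<subseteq> M' \<longrightarrow> M' = M)"

definition equimatchable :: "'a set \<Rightarrow> 'a set set \<Rightarrow> bool" where
  "equimatchable V E \<longleftrightarrow>
     (\<forall>M1 M2. maximal_matching E M1 \<longrightarrow> maximal_matching E M2 \<longrightarrow> card M1 = card M2)"

definition edge_stable :: "'a set \<Rightarrow> 'a set set \<Rightarrow> bool" where
  "edge_stable V E \<longleftrightarrow> equimatchable V E \<and> (\<forall>e\<in>E. equimatchable V (E - {e}))"

inductive reachable :: "'a set \<Rightarrow> 'a set set \<Rightarrow> 'a \<Rightarrow> 'a \<Rightarrow> bool" for V E where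
  refl: "u \<in> V \<Longrightarrow> reachable V E u u"
| step: "reachable V E u w \<Longrightarrow> {w, x} \<in> E \<Longrightarrow> x \<in> V \<Longrightarrow> reachable V E u x"

definition connected :: "'a set \<Rightarrow> 'a set set \<Rightarrow> bool" where
  "connected V E \<longleftrightarrow> V \<noteq> {} \<and> (\<forall>u\<in>V. \<forall>w\<in>V. reachable V E u w)"

definition induced_edges :: "'a set set \<Rightarrow> 'a set \<Rightarrow> 'a set set" where
  "induced_edges E S = {e \<in> E. e \<subseteq> S}"

definition component :: "'a set \<Rightarrow> 'a set set \<Rightarrow> 'a set \<Rightarrow> bool" where
  "component V E C \<longleftrightarrow> C \<subseteq> V \<and> connected C (induced_edges E C) \<and>
     (\<forall>D. C \<subseteq> D \<longrightarrow> D \<subseteq> V \<longrightarrow> connected D (induced_edges E D) \<longrightarrow> D = C)"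

definition cut_vertex :: "'a set \<Rightarrow> 'a set set \<Rightarrow> 'a \<Rightarrow> bool" where
  "cut_vertex V E v \<longleftrightarrow> v \<in> V \<and> \<not> connected (V - {v}) (induced_edges E (V - {v}))"

end

theory Submission
  imports Defs
begin

lemma ex_maximal_matching:
  assumes fin: "finite E"
  shows "\<exists>M. maximal_matching E M"
proof -
  let ?P = "\<lambda>n. \<exists>M. matching E M \<and> card M = n"
  have P0: "?P 0" by (rule exI[of _ "{}"]) (simp add: matching_def)
  have bnd: "\<forall>y. ?P y \<longrightarrow> y \<le> card E"
  proof (intro allI impI)
    fix y assume "?P y"
    then obtain M where "M \<subseteq> E" "card M = y" unfolding matching_def by blast
    then show "y \<le> card E" using card_mono[OF fin] by blast
  qed
  obtain n where n: "?P n" and nmax: "\<forall>y. ?P y \<longrightarrow> y \<le> n"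
    using Nat.ex_has_greatest_nat[OF P0 bnd] by blast
  obtain M where M: "matching E M" "card M = n" using n by blast
  have "maximal_matching E M"
    unfolding maximal_matching_def
  proof (intro conjI allI impI)
    fix M' assume m': "matching E M'" and sub: "M \<subseteq> M'"
    have "M' \<subseteq> E" using m' unfolding matching_def by blast
    then have fM': "finite M'" using fin by (rule finite_subset)
    have "?P (card M')" using m' by (intro exI[of _ M']) simp
    then have "card M' \<le> n" by (rule nmax[rule_format])
    then have "card M' \<le> card M" using M(2) by simp
    then have "card M = card M'" by (rule antisym[OF card_mono[OF fM' sub]])
    then show "M' = M" by (rule card_subset_eq[OF fM' sub, symmetric])
  qed (rule M(1))
  then show ?thesis by blast
qed

lemma graph_finite_E: "graph V E \<Longrightarrow> finite E"
proof -
  assume g: "graph V E"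
  have "E \<subseteq> Pow V"
  proof
    fix e assume e: "e \<in> E"
    have "\<exists>u w. e = {u, w} \<and> u \<noteq> w \<and> u \<in> V \<and> w \<in> V"
      using g e unfolding graph_def by (elim conjE) (erule bspec)
    then obtain u w where "e = {u, w}" "u \<in> V" "w \<in> V" by blast
    then show "e \<in> Pow V" by simp
  qed
  moreover have "finite V" using g unfolding graph_def by (rule conjunct1)
  ultimately show ?thesis by (metis finite_Pow_iff finite_subset)
qed

lemma matching_insert:
  assumes m: "matching E M" and f: "f \<in> E" and d: "\<forall>g\<in>M. f \<inter> g = {}"
  shows "matching E (insert f M)"
  unfolding matching_def
proof (intro conjI ballI impI)
  show "insert f M \<subseteq> E" using m f unfolding matching_def by blast
next
  fix e1 e2 assume e1: "e1 \<in> insert f M" and e2: "e2 \<in> insert f M" and ne: "e1 \<noteq> e2"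
  have md: "\<forall>e1\<in>M. \<forall>e2\<in>M. e1 \<noteq> e2 \<longrightarrow> e1 \<inter> e2 = {}"
    using m unfolding matching_def by (rule conjunct2)
  show "e1 \<inter> e2 = {}"
  proof (cases "e1 = f")
    case True
    then have "e2 \<in> M" using e2 ne by blast
    then show ?thesis using d True by blast
  next
    case False
    then have "e1 \<in> M" using e1 by blast
    show ?thesis
    proof (cases "e2 = f")
      case True
      then have "f \<inter> e1 = {}" using d \<open>e1 \<in> M\<close> by blast
      then show ?thesis using True by blast
    next
      case False
      then have "e2 \<in> M" using e2 by blast
      then show ?thesis using md \<open>e1 \<in> M\<close> ne by blast
    qed
  qed
qed

lemma key:
  assumes g: "graph V E" and eq: "equimatchable V E"
    and CV: "C \<subseteq> V" and vC: "v \<notin> C" and uC: "u \<notin> C" and uv: "u \<noteq> v"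
    and vu: "{v,u} \<in> E"
    and nc: "\<And>x y. x \<in> C \<Longrightarrow> y \<in> V \<Longrightarrow> y \<notin> C \<Longrightarrow> y \<noteq> v \<Longrightarrow> {x,y} \<in> E \<Longrightarrow> False"
  shows "equimatchable C (induced_edges E C)"
  unfolding equimatchable_def
proof (intro allI impI)
  fix M1 M2
  assume m1: "maximal_matching (induced_edges E C) M1"
     and m2: "maximal_matching (induced_edges E C) M2"
  have finE: "finite E" using g by (rule graph_finite_E)
  define W where "W = V - C - {v, u}"
  obtain N0 where N0: "maximal_matching (induced_edges E W) N0"
    using ex_maximal_matching[of "induced_edges E W"] finE
    by (auto simp: induced_edges_def)
  define N where "N = insert {v,u} N0"
  have edge2: "\<And>f. f \<in> E \<Longrightarrow> \<exists>a b. f = {a,b} \<and> a \<noteq> b \<and> a \<in> V \<and> b \<in> V"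
    using g unfolding graph_def by blast
  have N0E: "N0 \<subseteq> E" and N0W: "\<forall>f\<in>N0. f \<subseteq> W"
    using N0 by (auto simp: maximal_matching_def matching_def induced_edges_def)
  have ext: "maximal_matching E (M \<union> N)" and disj: "M \<inter> N = {}"
    if m: "maximal_matching (induced_edges E C) M" for M
  proof -
    have ME: "M \<subseteq> E" and MC: "\<forall>f\<in>M. f \<subseteq> C"
      using m by (auto simp: maximal_matching_def matching_def induced_edges_def)
    have Mdisj: "\<forall>e1\<in>M. \<forall>e2\<in>M. e1 \<noteq> e2 \<longrightarrow> e1 \<inter> e2 = {}"
      using m by (auto simp: maximal_matching_def matching_def)
    have N0disj: "\<forall>e1\<in>N0. \<forall>e2\<in>N0. e1 \<noteq> e2 \<longrightarrow> e1 \<inter> e2 = {}"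
      using N0 by (auto simp: maximal_matching_def matching_def)
    have mat: "matching E (M \<union> N)"
      unfolding matching_def
    proof (intro conjI ballI impI)
      show "M \<union> N \<subseteq> E" using ME N0E vu N_def by auto
    next
      fix e1 e2 assume e1: "e1 \<in> M \<union> N" and e2: "e2 \<in> M \<union> N" and ne: "e1 \<noteq> e2"
      have loc: "e \<subseteq> C \<or> e \<subseteq> W \<or> e = {v,u}" if "e \<in> M \<union> N" for e
        using that MC N0W N_def by auto
      have WC: "W \<inter> C = {}" "v \<notin> W" "u \<notin> W" by (auto simp: W_def)
      show "e1 \<inter> e2 = {}"
      proof (cases "e1 \<in> M")
        case True
        show ?thesis
        proof (cases "e2 \<in> M")
          case True then show ?thesis using \<open>e1 \<in> M\<close> Mdisj ne by blast
        next
          case False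
          then have "e2 \<in> N" using e2 by blast
          then have "e2 \<subseteq> W \<or> e2 = {v,u}" using N0W N_def by auto
          then show ?thesis using MC True WC vC uC by blast
        qed
      next
        case False
        then have n1: "e1 \<in> N" using e1 by blast
        then have l1: "e1 \<subseteq> W \<or> e1 = {v,u}" using N0W N_def by auto
        show ?thesis
        proof (cases "e2 \<in> M")
          case True
          then show ?thesis using MC l1 WC vC uC by blast
        next
          case False
          then have n2: "e2 \<in> N" using e2 by blast
          then have l2: "e2 \<subseteq> W \<or> e2 = {v,u}" using N0W N_def by auto
          show ?thesis
          proof (cases "e1 = {v,u}")
            case True
            then have "e2 \<subseteq> W" using l2 ne by auto
            then show ?thesis using True WC by blast
          next
            case f1: False
            show ?thesis
            proof (cases "e2 = {v,u}")
              case True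
              then show ?thesis using l1 f1 WC by blast
            next
              case False
              then have "e1 \<in> N0" "e2 \<in> N0" using n1 n2 f1 N_def by auto
              then show ?thesis using N0disj ne by blast
            qed
          qed
        qed
      qed
    qed
    show "maximal_matching E (M \<union> N)"
      unfolding maximal_matching_def
    proof (intro conjI allI impI)
      show "matching E (M \<union> N)" by (rule mat)
    next
      fix M' assume m': "matching E M'" and sub: "M \<union> N \<subseteq> M'"
      have M'E: "M' \<subseteq> E" and M'd: "\<forall>e1\<in>M'. \<forall>e2\<in>M'. e1 \<noteq> e2 \<longrightarrow> e1 \<inter> e2 = {}"
        using m' by (auto simp: matching_def)
      have "M' \<subseteq> M \<union> N"
      proof
        fix f assume fM': "f \<in> M'"
        show "f \<in> M \<union> N"
        proof (rule ccontr)
          assume fn: "f \<notin> M \<union> N"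
          have fdis: "\<forall>g\<in>M \<union> N. f \<inter> g = {}"
          proof
            fix g assume "g \<in> M \<union> N"
            then have "g \<in> M'" "f \<noteq> g" using sub fn by auto
            then show "f \<inter> g = {}" using M'd fM' by blast
          qed
          have fE: "f \<in> E" using fM' M'E by blast
          obtain a b where ab: "f = {a,b}" "a \<noteq> b" "a \<in> V" "b \<in> V"
            using edge2[OF fE] by blast
          have "{v,u} \<in> M \<union> N" unfolding N_def by (rule UnI2, rule insertI1)
          then have fvu: "f \<inter> {v,u} = {}" by (rule bspec[OF fdis])
          show False
          proof (cases "f \<subseteq> C")
            case True
            have "matching (induced_edges E C) (insert f M)"
              apply (rule matching_insert)
              using m fE True fdis by (auto simp: maximal_matching_def induced_edges_def)
            then have "insert f M = M"
              using m unfolding maximal_matching_def by blast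
            then show False using fn by blast
          next
            case False
            have aC: "a \<notin> C"
            proof
              assume "a \<in> C"
              then have "b \<notin> C" using False ab by auto
              moreover have "b \<noteq> v" using fvu ab by auto
              ultimately show False using nc[of a b] \<open>a \<in> C\<close> ab fE by auto
            qed
            have bC: "b \<notin> C"
            proof
              assume "b \<in> C"
              moreover have "a \<noteq> v" using fvu ab by auto
              moreover have "{b,a} \<in> E" using fE ab by (simp add: insert_commute)
              ultimately show False using nc[of b a] aC ab by auto
            qed
            have fW: "f \<subseteq> W" using aC bC ab fvu W_def by auto
            have "\<forall>g\<in>N0. f \<inter> g = {}"
            proof
              fix g assume "g \<in> N0"
              then have "g \<in> M \<union> N" unfolding N_def by blast
              then show "f \<inter> g = {}" by (rule bspec[OF fdis])
            qed
            then have "matching (induced_edges E W) (insert f N0)"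
              apply (intro matching_insert)
              using N0 fE fW by (auto simp: maximal_matching_def induced_edges_def)
            then have "insert f N0 = N0"
              using N0 unfolding maximal_matching_def by blast
            then show False using fn N_def by blast
          qed
        qed
      qed
      then show "M' = M \<union> N" using sub by blast
    qed
    show "M \<inter> N = {}"
    proof (rule ccontr)
      assume "M \<inter> N \<noteq> {}"
      then obtain f where f: "f \<in> M" "f \<in> N" by blast
      then have fC: "f \<subseteq> C" using MC by blast
      have fE: "f \<in> E" using f ME by blast
      obtain a b where ab: "f = {a,b}" "a \<noteq> b" "a \<in> V" "b \<in> V"
        using edge2[OF fE] by blast
      have "f = {v,u} \<or> f \<subseteq> W" using f(2) N0W N_def by auto
      then show False using fC ab vC W_def by auto
    qed
  qed
  have finN: "finite N" using N0E vu N_def finE by (auto intro: finite_subset)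
  have finM: "finite M" if "maximal_matching (induced_edges E C) M" for M
    using that finE by (auto simp: maximal_matching_def matching_def induced_edges_def intro: finite_subset)
  have "card (M1 \<union> N) = card (M2 \<union> N)"
    using eq ext[OF m1] ext[OF m2] unfolding equimatchable_def by blast
  then have "card M1 + card N = card M2 + card N"
    using card_Un_disjoint[OF finM[OF m1] finN disj[OF m1]]
          card_Un_disjoint[OF finM[OF m2] finN disj[OF m2]] by simp
  then show "card M1 = card M2" by simp
qed

lemma reach_mono:
  assumes "reachable C F a b" "C \<subseteq> D" "F \<subseteq> F'"
  shows "reachable D F' a b"
  using assms by (induction rule: reachable.induct) (auto intro: reachable.intros)

lemma reach_trans:
  assumes "reachable V E b c" "reachable V E a b"
  shows "reachable V E a c"
  using assms by (induction rule: reachable.induct) (auto intro: reachable.intros)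

lemma reach_in: "reachable V E a b \<Longrightarrow> b \<in> V"
  by (induction rule: reachable.induct) auto

lemma induced_induced: "S \<subseteq> T \<Longrightarrow> induced_edges (induced_edges E T) S = induced_edges E S"
  unfolding induced_edges_def by blast

lemma no_cross:
  assumes comp: "component (V - {v}) (induced_edges E (V - {v})) C"
    and x: "x \<in> C" and y: "y \<in> V" "y \<noteq> v" "y \<notin> C" and xy: "{x,y} \<in> E"
  shows False
proof -
  have CV: "C \<subseteq> V - {v}" using comp unfolding component_def by blast
  have conC: "connected C (induced_edges E C)"
    using comp CV induced_induced[OF CV] unfolding component_def by simp
  define D where "D = insert y C"
  have DV: "D \<subseteq> V - {v}" using CV y D_def by blast
  have xyD: "{x,y} \<in> induced_edges E D" "{y,x} \<in> induced_edges E D"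
    using xy x D_def by (auto simp: induced_edges_def insert_commute)
  have sub: "induced_edges E C \<subseteq> induced_edges E D"
    using D_def by (auto simp: induced_edges_def)
  have CD: "C \<subseteq> D" using D_def by blast
  have rC: "reachable D (induced_edges E D) a b" if "a \<in> C" "b \<in> C" for a b
    using conC that reach_mono[OF _ CD sub] unfolding connected_def by blast
  have yD: "y \<in> D" using D_def by blast
  have yx: "reachable D (induced_edges E D) y x"
    using reachable.step[OF reachable.refl[OF yD] xyD(2)] x CD by blast
  have "connected D (induced_edges E D)"
    unfolding connected_def
  proof (intro conjI ballI)
    show "D \<noteq> {}" using D_def by blast
  next
    fix a b assume a: "a \<in> D" and b: "b \<in> D"
    show "reachable D (induced_edges E D) a b"
    proof (cases "a = y")
      case True
      show ?thesis
      proof (cases "b = y")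
        case True then show ?thesis using \<open>a = y\<close> yD by (simp add: reachable.refl)
      next
        case False
        then have "b \<in> C" using b D_def by blast
        then show ?thesis using reach_trans[OF rC[OF x] yx] True by simp
      qed
    next
      case False
      then have aC: "a \<in> C" using a D_def by blast
      show ?thesis
      proof (cases "b = y")
        case True
        then show ?thesis using reachable.step[OF rC[OF aC x] xyD(1)] yD by simp
      next
        case False
        then have "b \<in> C" using b D_def by blast
        then show ?thesis using rC aC by blast
      qed
    qed
  qed
  then have "connected D (induced_edges (induced_edges E (V - {v})) D)"
    using induced_induced[OF DV] by simp
  then have "D = C" using comp CD DV unfolding component_def by blast
  then show False using yD y by blast
qed

lemma walk_out:
  assumes "reachable V E y x" "y \<notin> C" "y \<noteq> v"
    and nc: "\<And>a b. a \<in> C \<Longrightarrow> b \<in> V \<Longrightarrow> b \<noteq> v \<Longrightarrow> b \<notin> C \<Longrightarrow> {a,b} \<in> E \<Longrightarrow> False"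
  shows "(x \<notin> C \<and> x \<noteq> v) \<or> (\<exists>u. u \<notin> C \<and> u \<noteq> v \<and> {u,v} \<in> E)"
  using assms(1-3)
proof (induction rule: reachable.induct)
  case (refl u) then show ?case by blast
next
  case (step u w x)
  show ?case
  proof (cases "\<exists>u. u \<notin> C \<and> u \<noteq> v \<and> {u,v} \<in> E")
    case True then show ?thesis by blast
  next
    case False
    then have w: "w \<notin> C" "w \<noteq> v" using step by blast+
    have wV: "w \<in> V" using step(1) by (rule reach_in)
    show ?thesis
    proof (cases "x = v")
      case True then show ?thesis using w step(2) by blast
    next
      case xv: False
      show ?thesis
      proof (cases "x \<in> C")
        case True
        have "{x,w} \<in> E" using step(2) by (simp add: insert_commute)
        then show ?thesis using nc[OF True wV w(2) w(1)] by blast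
      next
        case False then show ?thesis using xv by blast
      qed
    qed
  qed
qed

theorem lemma4p2:
  fixes V :: "'a set" and E :: "'a set set" and v :: 'a
  assumes "graph V E"
    and "connected V E"
    and "edge_stable V E"
    and "cut_vertex V E v"
    and "component (V - {v}) (induced_edges E (V - {v})) C"
  shows "edge_stable C (induced_edges E C)"
proof -
  note g = assms(1) and comp = assms(5)
  have CV: "C \<subseteq> V - {v}" using comp unfolding component_def by blast
  have conC: "connected C (induced_edges E C)"
    using comp CV induced_induced[OF CV] unfolding component_def by simp
  have nc: "False" if "a \<in> C" "b \<in> V" "b \<notin> C" "b \<noteq> v" "{a,b} \<in> E" for a b
    by (rule no_cross[OF comp that(1) that(2) that(4) that(3) that(5)])
  have nc': "False" if "a \<in> C" "b \<in> V" "b \<noteq> v" "b \<notin> C" "{a,b} \<in> E" for a b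
    by (rule no_cross[OF comp that(1) that(2) that(3) that(4) that(5)])
  have vV: "v \<in> V" using assms(4) unfolding cut_vertex_def by (rule conjunct1)
  have "\<exists>y. y \<in> V \<and> y \<noteq> v \<and> y \<notin> C"
  proof (rule ccontr)
    assume nex: "\<not> (\<exists>y. y \<in> V \<and> y \<noteq> v \<and> y \<notin> C)"
    have "V - {v} \<subseteq> C"
    proof
      fix z assume "z \<in> V - {v}"
      then show "z \<in> C" using nex by blast
    qed
    then have "C = V - {v}" using CV by (rule equalityI[rotated])
    then have "connected (V - {v}) (induced_edges E (V - {v}))" using conC by simp
    then show False using assms(4) unfolding cut_vertex_def by (elim conjE) (rule notE)
  qed
  then obtain y where y: "y \<in> V" "y \<noteq> v" "y \<notin> C" by (elim exE conjE)
  have "\<forall>a\<in>V. \<forall>b\<in>V. reachable V E a b" using assms(2) unfolding connected_def by (rule conjunct2)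
  then have "reachable V E y v" using y(1) vV by (elim ballE) auto
  from walk_out[OF this y(3) y(2) nc']
  have "\<exists>u. u \<notin> C \<and> u \<noteq> v \<and> {u,v} \<in> E" by simp
  then obtain u where u: "u \<notin> C" "u \<noteq> v" "{u,v} \<in> E" by (elim exE conjE)
  have vu: "{v,u} \<in> E" using u(3) by (simp add: insert_commute)
  have vC: "v \<notin> C" using CV by blast
  have CV': "C \<subseteq> V" using CV by blast
  have es: "equimatchable V E" "\<forall>e\<in>E. equimatchable V (E - {e})"
    using assms(3) unfolding edge_stable_def by (rule conjunct1, rule conjunct2)
  have eqC: "equimatchable C (induced_edges E C)"
    by (rule key[OF g es(1) CV' vC u(1) u(2) vu nc])
  have g1: "finite V" using g unfolding graph_def by (rule conjunct1)
  have g2: "\<forall>f\<in>E. \<exists>a b. f = {a, b} \<and> a \<noteq> b \<and> a \<in> V \<and> b \<in> V"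
    using g unfolding graph_def by (rule conjunct2)
  have "equimatchable C (induced_edges E C - {e})" if e: "e \<in> induced_edges E C" for e
  proof -
    have eE: "e \<in> E" "e \<subseteq> C" using e unfolding induced_edges_def by blast+
    have g': "graph V (E - {e})"
      unfolding graph_def
    proof (intro conjI ballI)
      show "finite V" by (rule g1)
    next
      fix f assume "f \<in> E - {e}"
      then have "f \<in> E" by simp
      then show "\<exists>a b. f = {a, b} \<and> a \<noteq> b \<and> a \<in> V \<and> b \<in> V" by (rule bspec[OF g2])
    qed
    have vu': "{v,u} \<in> E - {e}" using vu eE(2) vC by blast
    have nc3: "False" if "a \<in> C" "b \<in> V" "b \<notin> C" "b \<noteq> v" "{a,b} \<in> E - {e}" for a b
      using that(5) by (intro nc[OF that(1-4)]) simp
    have "equimatchable C (induced_edges (E - {e}) C)"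
      by (rule key[OF g' bspec[OF es(2) eE(1)] CV' vC u(1) u(2) vu' nc3])
    moreover have "induced_edges (E - {e}) C = induced_edges E C - {e}"
      unfolding induced_edges_def by blast
    ultimately show ?thesis by simp
  qed
  then show ?thesis using eqC unfolding edge_stable_def by blast
qed

end
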